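(* Let $D$ be a locally finite connected C-homogeneous digraph and let $x\in VD$. If $N^+(x)$ or $N^-(x)$ consists of precisely one vertex, then $D$ is either an infinite tree or a directed cycle.
   Context: A digraph has an irreflexive, antisymmetric edge relation; connectedness, local finiteness and being a tree refer to the underlying undirected graph. $D$ is C-homogeneous if every isomorphism between finite connected induced subdigraphs extends to an automorphism of $D$. $N^+(x)=\{y: xy\in ED\}$, $N^-(x)=\{y: yx\in ED\}$. *)

theory Defs
  imports Main
begin

definition digraph :: "'a set \<Rightarrow> ('a \<times> 'a) set \<Rightarrow> bool" where
  "digraph V E \<longleftrightarrow> E \<subseteq> V \<times> V \<and> (\<forall>x. (x, x) \<notin> E) \<and> (\<forall>x y. (x, y) \<in> E \<longrightarrow> (y, x) \<notin> E)"

definition out_nbrs :: "('a \<times> 'a) set \<Rightarrow> 'a \<Rightarrow> 'a set" where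
  "out_nbrs E x = {y. (x, y) \<in> E}"

definition in_nbrs :: "('a \<times> 'a) set \<Rightarrow> 'a \<Rightarrow> 'a set" where
  "in_nbrs E x = {y. (y, x) \<in> E}"

definition adj :: "('a \<times> 'a) set \<Rightarrow> 'a \<Rightarrow> 'a \<Rightarrow> bool" where
  "adj E x y \<longleftrightarrow> (x, y) \<in> E \<or> (y, x) \<in> E"

definition connected_on :: "('a \<times> 'a) set \<Rightarrow> 'a set \<Rightarrow> bool" where
  "connected_on E S \<longleftrightarrow>
     (\<forall>x\<in>S. \<forall>y\<in>S. (x, y) \<in> ({(u, v). u \<in> S \<and> v \<in> S \<and> adj E u v})\<^sup>*)"

definition locally_finite :: "'a set \<Rightarrow> ('a \<times> 'a) set \<Rightarrow> bool" where
  "locally_finite V E \<longleftrightarrow> (\<forall>x\<in>V. finite {y. adj E x y})"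

definition induced_iso :: "('a \<times> 'a) set \<Rightarrow> ('a \<Rightarrow> 'a) \<Rightarrow> 'a set \<Rightarrow> 'a set \<Rightarrow> bool" where
  "induced_iso E f A B \<longleftrightarrow> bij_betw f A B \<and>
     (\<forall>x\<in>A. \<forall>y\<in>A. (x, y) \<in> E \<longleftrightarrow> (f x, f y) \<in> E)"

definition automorphism :: "'a set \<Rightarrow> ('a \<times> 'a) set \<Rightarrow> ('a \<Rightarrow> 'a) \<Rightarrow> bool" where
  "automorphism V E g \<longleftrightarrow> induced_iso E g V V"

definition C_homogeneous :: "'a set \<Rightarrow> ('a \<times> 'a) set \<Rightarrow> bool" where
  "C_homogeneous V E \<longleftrightarrow>
     (\<forall>A B f. A \<subseteq> V \<and> B \<subseteq> V \<and> finite A \<and> finite B \<and>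
        connected_on E A \<and> connected_on E B \<and> induced_iso E f A B \<longrightarrow>
        (\<exists>g. automorphism V E g \<and> (\<forall>x\<in>A. g x = f x)))"

definition has_undirected_cycle :: "'a set \<Rightarrow> ('a \<times> 'a) set \<Rightarrow> bool" where
  "has_undirected_cycle V E \<longleftrightarrow>
     (\<exists>n (v :: nat \<Rightarrow> 'a). n \<ge> 3 \<and> inj_on v {..<n} \<and> v ` {..<n} \<subseteq> V \<and>
        (\<forall>i<n. adj E (v i) (v (Suc i mod n))))"

definition is_tree :: "'a set \<Rightarrow> ('a \<times> 'a) set \<Rightarrow> bool" where
  "is_tree V E \<longleftrightarrow> connected_on E V \<and> \<not> has_undirected_cycle V E"

definition is_directed_cycle :: "'a set \<Rightarrow> ('a \<times> 'a) set \<Rightarrow> bool" where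
  "is_directed_cycle V E \<longleftrightarrow>
     (\<exists>n (v :: nat \<Rightarrow> 'a). n \<ge> 3 \<and> inj_on v {..<n} \<and> V = v ` {..<n} \<and>
        E = {(v i, v (Suc i mod n)) | i. i < n})"

end

theory Submission
  imports Defs
begin

lemma trans_aut:
  assumes "digraph V E" "C_homogeneous V E" "x \<in> V" "u \<in> V"
  shows "\<exists>g. automorphism V E g \<and> g x = u"
proof -
  have c1: "connected_on E {x}" "connected_on E {u}" by (auto simp: connected_on_def)
  have "induced_iso E (\<lambda>_. u) {x} {u}"
    using assms(1) by (auto simp: induced_iso_def bij_betw_def digraph_def)
  then show ?thesis using assms c1 unfolding C_homogeneous_def
    by (metis empty_subsetI finite.emptyI finite_insert insert_subset singletonI)
qed

lemma aut_edge:
  assumes "digraph V E" "automorphism V E g" "(a,b) \<in> E"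
  shows "(g a, g b) \<in> E"
  using assms by (auto simp: automorphism_def induced_iso_def digraph_def)

lemma aut_edge2:
  assumes "digraph V E" "automorphism V E g" "a \<in> V" "b \<in> V" "(g a, g b) \<in> E"
  shows "(a, b) \<in> E"
  using assms by (auto simp: automorphism_def induced_iso_def digraph_def)

lemma funpow_in:
  assumes "\<forall>u\<in>V. f u \<in> V" "u \<in> V" shows "(f^^k) u \<in> V"
  using assms by (induction k) auto

lemma aut_commute:
  assumes dg: "digraph V E" and fV: "\<forall>u\<in>V. (u, f u) \<in> E"
    and fE: "\<forall>u w. (u,w) \<in> E \<longrightarrow> w = f u"
    and g: "automorphism V E g" and u: "u \<in> V"
  shows "g ((f^^k) u) = (f^^k) (g u)"
proof -
  have fin: "\<forall>u\<in>V. f u \<in> V" using dg fV by (auto simp: digraph_def)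
  have gV: "\<forall>u\<in>V. g u \<in> V" using g by (auto simp: automorphism_def induced_iso_def bij_betw_def)
  show ?thesis
  proof (induction k)
    case 0 then show ?case by simp
  next
    case (Suc k)
    have a: "(f^^k) u \<in> V" using funpow_in[OF fin u] .
    have "((f^^k) u, f ((f^^k) u)) \<in> E" using fV a by blast
    then have "(g ((f^^k) u), g (f ((f^^k) u))) \<in> E" using aut_edge[OF dg g] by blast
    then have "g (f ((f^^k) u)) = f (g ((f^^k) u))" using fE by blast
    then show ?case using Suc by simp
  qed
qed

lemma funpow_mult_fix:
  assumes "(f^^n) x = x" shows "(f^^(q*n)) x = x"
  using assms by (induction q) (auto simp: funpow_add)

lemma funpow_mod:
  assumes "(f^^n) x = x" shows "(f^^k) x = (f^^(k mod n)) x"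
proof -
  have "k = k mod n + (k div n) * n" by simp
  then have "(f^^k) x = (f^^(k mod n)) ((f^^((k div n) * n)) x)"
    by (metis funpow_add o_apply)
  then show ?thesis using funpow_mult_fix[OF assms] by simp
qed

lemma caseA:
  assumes dg: "digraph V E" and conn: "connected_on E V" and x: "x \<in> V"
    and fV: "\<forall>u\<in>V. (u, f u) \<in> E"
    and fE: "\<forall>u w. (u,w) \<in> E \<longrightarrow> w = f u"
    and cyc: "\<forall>u\<in>V. \<exists>m>0. (f^^m) u = u"
  shows "is_directed_cycle V E"
proof -
  have fin: "\<forall>u\<in>V. f u \<in> V" using dg fV by (auto simp: digraph_def)
  define n where "n = (LEAST n. 0 < n \<and> (f^^n) x = x)"
  have ex: "\<exists>n. 0 < n \<and> (f^^n) x = x" using cyc x by blast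
  have n: "0 < n" "(f^^n) x = x" using LeastI_ex[OF ex] unfolding n_def by auto
  have nmin: "\<And>m. 0 < m \<Longrightarrow> m < n \<Longrightarrow> (f^^m) x \<noteq> x"
    using not_less_Least unfolding n_def by blast
  define v where "v i = (f^^i) x" for i
  have allO: "v k \<in> v ` {..<n}" for k
    using funpow_mod[OF n(2), of k] n(1) unfolding v_def by auto
  have vV: "v k \<in> V" for k unfolding v_def using funpow_in[OF fin x] .
  let ?R = "{(u, w). u \<in> V \<and> w \<in> V \<and> adj E u w}"
  have reach: "(x, u) \<in> ?R\<^sup>* \<Longrightarrow> u \<in> range v" for u
  proof (induction rule: rtrancl_induct)
    case base show ?case by (metis rangeI funpow_0 v_def)
  next
    case (step a b)
    then obtain i where ai: "a = v i" by blast
    from step have bV: "b \<in> V" and ad: "adj E a b" by auto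
    show ?case
    proof (cases "(a,b) \<in> E")
      case True
      then have "b = f a" using fE by blast
      then have "b = v (Suc i)" using ai by (simp add: v_def)
      then show ?thesis by blast
    next
      case False
      then have "(b,a) \<in> E" using ad by (auto simp: adj_def)
      then have fb: "a = f b" using fE by blast
      obtain m where m: "0 < m" "(f^^m) b = b" using cyc bV by blast
      then obtain m' where "m = Suc m'" using gr0_implies_Suc by blast
      then have "b = (f^^m') (f b)" using m(2) by (metis comp_apply funpow_Suc_right)
      also have "\<dots> = (f^^m') ((f^^i) x)" using fb ai v_def by simp
      also have "\<dots> = v (m' + i)" by (simp add: v_def funpow_add)
      finally show ?thesis by blast
    qed
  qed
  have Veq: "V = v ` {..<n}"
  proof
    show "V \<subseteq> v ` {..<n}"
    proof
      fix u assume "u \<in> V"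
      then have "(x,u) \<in> ?R\<^sup>*" using conn x unfolding connected_on_def by blast
      then obtain k where "u = v k" using reach by blast
      then show "u \<in> v ` {..<n}" using allO by simp
    qed
    show "v ` {..<n} \<subseteq> V" using vV by auto
  qed
  have inj: "inj_on v {..<n}"
  proof (rule inj_onI, rule ccontr)
    fix i j assume ij: "i \<in> {..<n}" "j \<in> {..<n}" "v i = v j" "i \<noteq> j"
    have key: "\<And>i j. i < j \<Longrightarrow> j < n \<Longrightarrow> v i = v j \<Longrightarrow> False"
    proof -
      fix i j assume a: "i < j" "j < n" "v i = v j"
      have "(f^^(n - i)) (v i) = (f^^(n - i)) (v j)" using a by simp
      moreover have "(f^^(n - i)) (v i) = (f^^n) x"
      proof -
        have "(f^^(n - i)) (v i) = (f^^((n - i) + i)) x" by (simp only: v_def funpow_add o_apply)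
        then show ?thesis using a by simp
      qed
      moreover have "(f^^(n - i)) (v j) = (f^^((j - i) + n)) x"
      proof -
        have "(f^^(n - i)) (v j) = (f^^((n - i) + j)) x" by (simp add: v_def funpow_add)
        moreover have "(n - i) + j = (j - i) + n" using a by simp
        ultimately show ?thesis by simp
      qed
      ultimately have "(f^^n) x = (f^^((j - i) + n)) x" by simp
      also have "\<dots> = (f^^(j-i)) ((f^^n) x)" by (simp add: funpow_add)
      finally have "(f^^(j - i)) x = x" using n(2) by simp
      then show False using nmin[of "j - i"] a by simp
    qed
    show False using ij key[of i j] key[of j i] by (cases "i < j") auto
  qed
  have n3: "n \<ge> 3"
  proof (rule ccontr)
    assume "\<not> 3 \<le> n"
    then have "n = 1 \<or> n = 2" using n(1) by auto
    then show False
    proof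
      assume "n = 1" then have "f x = x" using n by simp
      then show False using fV x dg by (auto simp: digraph_def)
    next
      assume "n = 2" then have ffx: "f (f x) = x" using n by (simp add: numeral_2_eq_2)
      have "(x, f x) \<in> E" "(f x, f (f x)) \<in> E" using fV fin x by auto
      then show False using ffx dg by (auto simp: digraph_def)
    qed
  qed
  have vsuc: "f (v i) = v (Suc i mod n)" for i
    using funpow_mod[OF n(2), of "Suc i"] by (simp add: v_def)
  have Eeq: "E = {(v i, v (Suc i mod n)) | i. i < n}"
  proof
    show "E \<subseteq> {(v i, v (Suc i mod n)) | i. i < n}"
    proof
      fix p assume p: "p \<in> E"
      obtain a b where ab: "p = (a,b)" by (cases p)
      have "a \<in> V" using p ab dg by (auto simp: digraph_def)
      then obtain i where i: "i < n" "a = v i" using Veq by auto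
      have "b = f a" using p ab fE by blast
      then show "p \<in> {(v i, v (Suc i mod n)) | i. i < n}" using i ab vsuc by auto
    qed
    show "{(v i, v (Suc i mod n)) | i. i < n} \<subseteq> E"
      using fV vV vsuc by (auto simp del: mod_Suc) (metis)
  qed
  show ?thesis unfolding is_directed_cycle_def using n3 inj Veq Eeq by blast
qed

lemma caseB:
  assumes dg: "digraph V E" and x: "x \<in> V"
    and fV: "\<forall>u\<in>V. (u, f u) \<in> E"
    and fE: "\<forall>u w. (u,w) \<in> E \<longrightarrow> w = f u"
    and nocyc: "\<forall>u\<in>V. \<not> (\<exists>m>0. (f^^m) u = u)"
  shows "infinite V \<and> \<not> has_undirected_cycle V E"
proof
  have fin: "\<forall>u\<in>V. f u \<in> V" using dg fV by (auto simp: digraph_def)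
  show "infinite V"
  proof
    assume fV': "finite V"
    have "inj (\<lambda>k. (f^^k) x)"
    proof (rule injI, rule ccontr)
      have key: "\<And>i j. i < j \<Longrightarrow> (f^^i) x = (f^^j) x \<Longrightarrow> False"
      proof -
        fix i j assume a: "i < j" "(f^^i) x = (f^^j) x"
        have "(f^^(j - i)) ((f^^i) x) = (f^^((j - i) + i)) x" by (simp add: funpow_add)
        also have "\<dots> = (f^^i) x" using a by simp
        finally have "(f^^(j - i)) ((f^^i) x) = (f^^i) x" .
        moreover have "0 < j - i" using a(1) by simp
        ultimately show False using nocyc funpow_in[OF fin x, of i] by blast
      qed
      fix i j assume "(f^^i) x = (f^^j) x" "i \<noteq> j"
      then show False using key[of i j] key[of j i] by (cases "i < j") auto
    qed
    moreover have "range (\<lambda>k. (f^^k) x) \<subseteq> V" using funpow_in[OF fin x] by auto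
    ultimately have "finite (UNIV :: nat set)"
      using fV' by (meson finite_imageD finite_subset)
    then show False by simp
  qed
  show "\<not> has_undirected_cycle V E"
  proof
    assume "has_undirected_cycle V E"
    then obtain n v where n: "n \<ge> 3" and inj: "inj_on v {..<n}" and vV: "v ` {..<n} \<subseteq> V"
      and ad: "\<forall>i<n. adj E (v i) (v (Suc i mod n))"
      unfolding has_undirected_cycle_def by blast
    have vV': "v (k mod n) \<in> V" for k
    proof -
      have "k mod n < n" using n by simp
      then show ?thesis using vV by blast
    qed
    have fb: "f (v i) = v (Suc i mod n) \<or> f (v (Suc i mod n)) = v i" if "i < n" for i
    proof -
      have "(v i, v (Suc i mod n)) \<in> E \<or> (v (Suc i mod n), v i) \<in> E"
        using ad that unfolding adj_def by blast
      then show ?thesis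
      proof
        assume "(v i, v (Suc i mod n)) \<in> E"
        then have "v (Suc i mod n) = f (v i)" using fE by blast
        then show ?thesis by simp
      next
        assume "(v (Suc i mod n), v i) \<in> E"
        then have "v i = f (v (Suc i mod n))" using fE by blast
        then show ?thesis by simp
      qed
    qed
    show False
    proof (cases "\<forall>i<n. f (v i) = v (Suc i mod n)")
      case True
      have "(f^^k) (v 0) = v (k mod n)" for k
      proof (induction k)
        case 0 then show ?case by simp
      next
        case (Suc k)
        have "(f^^Suc k) (v 0) = f (v (k mod n))" using Suc by simp
        also have "\<dots> = v (Suc (k mod n) mod n)" using True n by simp
        also have "\<dots> = v (Suc k mod n)" by (simp add: mod_Suc_eq)
        finally show ?case .
      qed
      then have "(f^^n) (v 0) = v 0" by simp
      moreover have "v 0 \<in> V" using vV n by auto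
      ultimately show False using nocyc n by (meson less_le_trans zero_less_numeral)
    next
      case False
      then obtain i where i: "i < n" "f (v i) \<noteq> v (Suc i mod n)" by blast
      have propg: "f (v (Suc j mod n)) = v j \<Longrightarrow> j < n \<Longrightarrow> f (v (Suc (Suc j mod n) mod n)) = v (Suc j mod n)" for j
      proof (rule ccontr)
        assume a: "f (v (Suc j mod n)) = v j" "j < n"
          "f (v (Suc (Suc j mod n) mod n)) \<noteq> v (Suc j mod n)"
        have jn: "Suc j mod n < n" using n by simp
        then have "f (v (Suc j mod n)) = v (Suc (Suc j mod n) mod n)" using fb[OF jn] a(3) by blast
        then have "v (Suc (Suc j mod n) mod n) = v j" using a by simp
        moreover have "Suc (Suc j mod n) mod n \<in> {..<n}" "j \<in> {..<n}" using n a(2) by auto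
        ultimately have eq: "Suc (Suc j mod n) mod n = j" using inj by (simp add: inj_on_eq_iff)
        have "Suc (Suc j mod n) mod n = (j + 2) mod n" by (simp add: mod_Suc_eq)
        then have "(j + 2) mod n = j mod n" using eq a(2) by simp
        show False
        proof (cases "j + 2 < n")
          case True then show ?thesis using \<open>(j + 2) mod n = j mod n\<close> a(2) by simp
        next
          case False
          then have "(j + 2) mod n = (j + 2 - n) mod n" using le_mod_geq by simp
          also have "\<dots> = j + 2 - n" using a(2) n by simp
          finally show ?thesis using \<open>(j + 2) mod n = j mod n\<close> a(2) n False by simp
        qed
      qed
      have bwd0: "f (v (Suc i mod n)) = v i" using fb[OF i(1)] i(2) by blast
      have allb: "f (v (Suc ((i + k) mod n) mod n)) = v ((i + k) mod n)" for k
      proof (induction k)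
        case 0 then show ?case using bwd0 i(1) by simp
      next
        case (Suc k)
        have "(i + k) mod n < n" using n by simp
        from propg[OF Suc this] show ?case by (simp add: mod_Suc_eq)
      qed
      have bw: "f (v (Suc j mod n)) = v j" if "j < n" for j
      proof -
        have "(i + (j + n - i)) mod n = j" using that i(1) by simp
        then show ?thesis using allb[of "j + n - i"] by simp
      qed
      have "(f^^k) (v (k mod n)) = v 0" for k
      proof (induction k)
        case 0 then show ?case using n by simp
      next
        case (Suc k)
        have "(f^^Suc k) (v (Suc k mod n)) = (f^^k) (f (v (Suc (k mod n) mod n)))"
          by (simp add: funpow_Suc_right mod_Suc_eq del: funpow.simps)
        also have "\<dots> = (f^^k) (v (k mod n))" using bw[of "k mod n"] n by simp
        finally show ?case using Suc by simp
      qed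
      then have "(f^^n) (v 0) = v 0" by (metis mod_self)
      moreover have "v 0 \<in> V" using vV n by auto
      ultimately show False using nocyc n by (meson less_le_trans zero_less_numeral)
    qed
  qed
qed

lemma out_case:
  assumes dg: "digraph V E" and conn: "connected_on E V" and ch: "C_homogeneous V E"
    and x: "x \<in> V" and oy: "out_nbrs E x = {y}"
  shows "(is_tree V E \<and> infinite V) \<or> is_directed_cycle V E"
proof -
  have tr: "\<exists>g. automorphism V E g \<and> g x = u" if "u \<in> V" for u
    using trans_aut[OF dg ch x that] .
  have xy: "\<And>w. (x,w) \<in> E \<longleftrightarrow> w = y" using oy by (auto simp: out_nbrs_def)
  have uniq: "\<exists>!w. (u,w) \<in> E" if u: "u \<in> V" for u
  proof -
    obtain g where g: "automorphism V E g" "g x = u" using tr u by blast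
    have bij: "bij_betw g V V" using g(1) by (simp add: automorphism_def induced_iso_def)
    have "(u, w) \<in> E \<longleftrightarrow> w = g y" for w
    proof
      assume uw: "(u, w) \<in> E"
      then have "w \<in> V" using dg by (auto simp: digraph_def)
      then obtain w' where w': "w' \<in> V" "w = g w'" using bij by (metis bij_betw_imp_surj_on imageE)
      have "(x, w') \<in> E" using aut_edge2[OF dg g(1) x w'(1)] uw g(2) w'(2) by simp
      then show "w = g y" using xy w' by simp
    next
      assume "w = g y"
      then show "(u, w) \<in> E" using aut_edge[OF dg g(1), of x y] xy g(2) by simp
    qed
    then show ?thesis by auto
  qed
  define f where "f u = (THE w. (u, w) \<in> E)" for u
  have fV: "\<forall>u\<in>V. (u, f u) \<in> E" unfolding f_def using uniq theI' by metis
  have fE: "\<forall>u w. (u,w) \<in> E \<longrightarrow> w = f u"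
  proof (intro allI impI)
    fix u w assume uw: "(u,w) \<in> E"
    then have "u \<in> V" using dg by (auto simp: digraph_def)
    then show "w = f u" using uniq fV uw by blast
  qed
  show ?thesis
  proof (cases "\<exists>m>0. (f^^m) x = x")
    case True
    then obtain m where m: "m > 0" "(f^^m) x = x" by blast
    have "\<forall>u\<in>V. \<exists>m>0. (f^^m) u = u"
    proof
      fix u assume u: "u \<in> V"
      obtain g where g: "automorphism V E g" "g x = u" using tr u by blast
      have "(f^^m) u = g ((f^^m) x)" using aut_commute[OF dg fV fE g(1) x, of m] g(2) by simp
      then show "\<exists>m>0. (f^^m) u = u" using m g(2) by auto
    qed
    then show ?thesis using caseA[OF dg conn x fV fE] by blast
  next
    case False
    have "\<forall>u\<in>V. \<not> (\<exists>m>0. (f^^m) u = u)"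
    proof (intro ballI notI)
      fix u assume u: "u \<in> V" and "\<exists>m>0. (f^^m) u = u"
      then obtain m where m: "m > 0" "(f^^m) u = u" by blast
      obtain g where g: "automorphism V E g" "g x = u" using tr u by blast
      have inj: "inj_on g V" using g(1) by (simp add: automorphism_def induced_iso_def bij_betw_def)
      have fin: "\<forall>u\<in>V. f u \<in> V" using dg fV by (auto simp: digraph_def)
      have "g ((f^^m) x) = g x" using aut_commute[OF dg fV fE g(1) x, of m] g(2) m(2) by simp
      then have "(f^^m) x = x" using inj funpow_in[OF fin x] x by (meson inj_onD)
      then show False using False m(1) by blast
    qed
    then have "infinite V \<and> \<not> has_undirected_cycle V E" using caseB[OF dg x fV fE] by blast
    then show ?thesis using conn by (simp add: is_tree_def)
  qed
qed

lemma conv_facts: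
  shows "adj (E\<inverse>) = adj E" "connected_on (E\<inverse>) = connected_on E"
    "digraph V (E\<inverse>) = digraph V E" "induced_iso (E\<inverse>) = induced_iso E"
    "automorphism V (E\<inverse>) = automorphism V E" "C_homogeneous V (E\<inverse>) = C_homogeneous V E"
    "has_undirected_cycle V (E\<inverse>) = has_undirected_cycle V E"
    "is_tree V (E\<inverse>) = is_tree V E" "out_nbrs (E\<inverse>) = in_nbrs E"
proof -
  show a: "adj (E\<inverse>) = adj E" by (auto simp: adj_def fun_eq_iff)
  show c: "connected_on (E\<inverse>) = connected_on E" by (simp add: fun_eq_iff connected_on_def a)
  show "digraph V (E\<inverse>) = digraph V E" by (auto simp: digraph_def)
  show i: "induced_iso (E\<inverse>) = induced_iso E" by (auto simp: fun_eq_iff induced_iso_def)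
  show au: "automorphism V (E\<inverse>) = automorphism V E" by (simp add: fun_eq_iff automorphism_def i)
  show "C_homogeneous V (E\<inverse>) = C_homogeneous V E" by (simp add: C_homogeneous_def c i au)
  show h: "has_undirected_cycle V (E\<inverse>) = has_undirected_cycle V E" by (simp add: has_undirected_cycle_def a)
  show "is_tree V (E\<inverse>) = is_tree V E" by (simp add: is_tree_def h c)
  show "out_nbrs (E\<inverse>) = in_nbrs E" by (auto simp: fun_eq_iff out_nbrs_def in_nbrs_def)
qed

lemma rev_cycle:
  assumes "is_directed_cycle V (E\<inverse>)"
  shows "is_directed_cycle V E"
proof -
  obtain n v where n: "n \<ge> 3" and inj: "inj_on v {..<n}" and Veq: "V = v ` {..<n}"
    and Eeq: "E\<inverse> = {(v i, v (Suc i mod n)) | i. i < n}"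
    using assms unfolding is_directed_cycle_def by blast
  define w where "w i = v (n - 1 - i)" for i
  have h1: "\<exists>i<n. w i = v (Suc j mod n) \<and> w (Suc i mod n) = v j" if j: "j < n" for j
  proof (cases "j = n - 1")
    case True
    then show ?thesis using n by (intro exI[of _ "n - 1"]) (auto simp: w_def)
  next
    case False
    then have "Suc j < n" using j by simp
    moreover have "n - Suc (Suc (n - Suc (Suc j))) = j" using \<open>Suc j < n\<close> by arith
    ultimately show ?thesis using n j by (intro exI[of _ "n - 2 - j"]) (auto simp: w_def)
  qed
  have h2: "\<exists>j<n. w i = v (Suc j mod n) \<and> w (Suc i mod n) = v j" if i: "i < n" for i
  proof (cases "i = n - 1")
    case True
    then show ?thesis using n by (intro exI[of _ "n - 1"]) (auto simp: w_def)
  next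
    case False
    then have "Suc i < n" using i by simp
    moreover have "n - Suc (Suc (n - Suc (Suc i))) = i" using \<open>Suc i < n\<close> by arith
    moreover have "Suc (n - Suc (Suc i)) = n - Suc i" using \<open>Suc i < n\<close> by arith
    ultimately show ?thesis using n i by (intro exI[of _ "n - 2 - i"]) (auto simp: w_def)
  qed
  have E2: "E = {(w i, w (Suc i mod n)) | i. i < n}"
  proof
    show "E \<subseteq> {(w i, w (Suc i mod n)) | i. i < n}"
    proof
      fix p assume "p \<in> E"
      then obtain a b where p: "p = (a,b)" "(b,a) \<in> E\<inverse>" by (cases p) auto
      then obtain j where j: "j < n" "b = v j" "a = v (Suc j mod n)" using Eeq by blast
      obtain i where "i < n" "w i = v (Suc j mod n)" "w (Suc i mod n) = v j" using h1[OF j(1)] by blast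
      then have "p = (w i, w (Suc i mod n))" "i < n" using p(1) j by auto
      then show "p \<in> {(w i, w (Suc i mod n)) | i. i < n}" by blast
    qed
    show "{(w i, w (Suc i mod n)) | i. i < n} \<subseteq> E"
    proof
      fix p assume "p \<in> {(w i, w (Suc i mod n)) | i. i < n}"
      then obtain i where i: "i < n" "p = (w i, w (Suc i mod n))" by blast
      obtain j where j: "j < n" "w i = v (Suc j mod n)" "w (Suc i mod n) = v j" using h2[OF i(1)] by blast
      have "(v j, v (Suc j mod n)) \<in> E\<inverse>" using Eeq j(1) by blast
      then show "p \<in> E" using i(2) j by simp
    qed
  qed
  have im: "(\<lambda>i. n - 1 - i) ` {..<n} = {..<n}"
  proof
    show "(\<lambda>i. n - 1 - i) ` {..<n} \<subseteq> {..<n}" using n by auto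
    show "{..<n} \<subseteq> (\<lambda>i. n - 1 - i) ` {..<n}"
    proof
      fix k assume "k \<in> {..<n}"
      then have "k = n - 1 - (n - 1 - k)" "n - 1 - k \<in> {..<n}" by auto
      then show "k \<in> (\<lambda>i. n - 1 - i) ` {..<n}" by blast
    qed
  qed
  have wc: "w = v \<circ> (\<lambda>i. n - 1 - i)" by (simp add: w_def fun_eq_iff)
  have wim: "w ` {..<n} = v ` {..<n}"
    unfolding wc image_comp[symmetric] im ..
  have winj: "inj_on w {..<n}"
  proof (rule inj_onI)
    fix i j assume ij: "i \<in> {..<n}" "j \<in> {..<n}" "w i = w j"
    have "n - 1 - i \<in> {..<n}" "n - 1 - j \<in> {..<n}" using ij(1,2) by auto
    then have "n - 1 - i = n - 1 - j" using inj_onD[OF inj] ij(3) unfolding w_def by blast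
    then show "i = j" using ij(1,2) by auto
  qed
  have "V = w ` {..<n}" using Veq wim by simp
  then show ?thesis unfolding is_directed_cycle_def using n winj E2 by blast
qed

theorem lemma4p1:
  fixes V :: "'a set" and E :: "('a \<times> 'a) set" and x :: 'a
  assumes "digraph V E"
    and "locally_finite V E"
    and "connected_on E V"
    and "C_homogeneous V E"
    and "x \<in> V"
    and "(\<exists>y. out_nbrs E x = {y}) \<or> (\<exists>y. in_nbrs E x = {y})"
  shows "(is_tree V E \<and> infinite V) \<or> is_directed_cycle V E"
proof -
  have d: "digraph V (E\<inverse>)" using assms(1) by (simp only: conv_facts)
  have c: "connected_on (E\<inverse>) V" using assms(3) by (simp only: conv_facts)
  have h: "C_homogeneous V (E\<inverse>)" using assms(4) by (simp only: conv_facts)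
  show ?thesis
  proof (cases "\<exists>y. out_nbrs E x = {y}")
    case True
    then obtain y where y: "out_nbrs E x = {y}" by blast
    show ?thesis using out_case[OF assms(1) assms(3) assms(4) assms(5) y] .
  next
    case False
    then obtain y where "in_nbrs E x = {y}" using assms(6) by blast
    then have y: "out_nbrs (E\<inverse>) x = {y}" by (simp only: conv_facts)
    have "(is_tree V (E\<inverse>) \<and> infinite V) \<or> is_directed_cycle V (E\<inverse>)"
      using out_case[OF d c h assms(5) y] .
    then have "(is_tree V E \<and> infinite V) \<or> is_directed_cycle V (E\<inverse>)"
      by (simp only: conv_facts)
    then show ?thesis using rev_cycle by blast
  qed
qed

end
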